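(* For every integer $n>2$ there exists a unique $\zeta>1$ such that the system $$P_n'(1-\varepsilon_{j+1})-P_n'(1-\varepsilon_j)=\varepsilon_{j+1}P_n'(1-\varepsilon_{j+1})+P_n(1-\varepsilon_{j+1})-\frac{j}{\zeta},\qquad j=1,\dots,n-1,$$ has a solution $(\varepsilon_j)_{j=1}^n$ with $0=\varepsilon_n<\varepsilon_{n-1}<\dots<\varepsilon_2<\varepsilon_1=1$.
   Context: $P_n(t)=\sum_{i=1}^nt^i$ and $P_n'(t)=\sum_{i=1}^n i\,t^{i-1}$. *)

theory Defs
  imports Complex_Main
begin

definition P :: "nat \<Rightarrow> real \<Rightarrow> real" where
  "P n t = (\<Sum>i=1..n. t ^ i)"

definition P' :: "nat \<Rightarrow> real \<Rightarrow> real" where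
  "P' n t = (\<Sum>i=1..n. real i * t ^ (i - 1))"

end

theory Submission
  imports Defs "HOL-Analysis.Analysis"
begin

definition gg :: "nat \<Rightarrow> real \<Rightarrow> real" where "gg n x = x * P' n x - P n x"
definition hh :: "nat \<Rightarrow> real \<Rightarrow> real" where "hh n x = P' n x - gg n x"
definition P2 :: "nat \<Rightarrow> real \<Rightarrow> real" where
  "P2 n x = (\<Sum>i=1..n. real i * real (i - 1) * x ^ (i - 2))"

lemma P_deriv: "(P n has_real_derivative P' n x) (at x)"
proof -
  have "((\<lambda>x. \<Sum>i=1..n. x ^ i) has_real_derivative (\<Sum>i=1..n. real i * x ^ (i - 1))) (at x)"
    by (rule DERIV_sum) (use DERIV_pow in simp)
  then show ?thesis unfolding P_def P'_def by (simp add: fun_eq_iff)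
qed

lemma P'_deriv: "(P' n has_real_derivative P2 n x) (at x)"
proof -
  have "((\<lambda>x. \<Sum>i=1..n. real i * x ^ (i - 1)) has_real_derivative
        (\<Sum>i=1..n. real i * (real (i - 1) * x ^ (i - 1 - 1)))) (at x)"
    apply (intro DERIV_sum DERIV_cmult)
    subgoal for i using DERIV_pow[of "i - 1" x UNIV] by (simp add: numeral_2_eq_2)
    done
  moreover have "(\<Sum>i=1..n. real i * (real (i - 1) * x ^ (i - 1 - 1))) = P2 n x"
    unfolding P2_def by (intro sum.cong) (auto simp: numeral_2_eq_2)
  ultimately show ?thesis unfolding P'_def by (simp add: fun_eq_iff)
qed

lemma gg_deriv: "(gg n has_real_derivative x * P2 n x) (at x)"
proof -
  have "((\<lambda>x. x * P' n x - P n x) has_real_derivative (1 * P' n x + x * P2 n x) - P' n x) (at x)"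
    by (auto intro!: derivative_eq_intros P_deriv P'_deriv)
  then show ?thesis unfolding gg_def[abs_def] by simp
qed

lemma hh_deriv: "(hh n has_real_derivative (1 - x) * P2 n x) (at x)"
proof -
  have "((\<lambda>x. P' n x - gg n x) has_real_derivative P2 n x - x * P2 n x) (at x)"
    by (intro derivative_intros gg_deriv P'_deriv)
  then show ?thesis unfolding hh_def[abs_def] by (simp add: algebra_simps)
qed

lemma P2_nonneg: "x \<ge> 0 \<Longrightarrow> P2 n x \<ge> 0"
  unfolding P2_def by (intro sum_nonneg) auto

lemma P2_pos: assumes "n \<ge> 2" "x \<ge> 0" shows "P2 n x > 0"
proof -
  have "P2 n x = (\<Sum>i\<in>{1..n}-{2}. real i * real (i - 1) * x ^ (i - 2)) + real 2 * real (2-1) * x^(2-2)"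
    unfolding P2_def using assms by (subst sum.remove[of _ 2]) auto
  moreover have "(\<Sum>i\<in>{1..n}-{2}. real i * real (i - 1) * x ^ (i - 2)) \<ge> 0"
    using assms by (intro sum_nonneg) auto
  ultimately show ?thesis by simp
qed

lemma cont_P: "continuous_on S (P n)"
  using P_deriv by (meson DERIV_continuous continuous_at_imp_continuous_on)
lemma cont_P': "continuous_on S (P' n)"
  using P'_deriv by (meson DERIV_continuous continuous_at_imp_continuous_on)
lemma cont_gg: "continuous_on S (gg n)"
  using gg_deriv by (meson DERIV_continuous continuous_at_imp_continuous_on)
lemma cont_hh: "continuous_on S (hh n)"
  using hh_deriv by (meson DERIV_continuous continuous_at_imp_continuous_on)

lemma gg_strict: assumes "n \<ge> 2" "0 \<le> a" "a < b" shows "gg n a < gg n b"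
  apply (rule DERIV_pos_imp_increasing_open[OF assms(3)])
   apply (rule exI, rule conjI, rule gg_deriv)
  using assms P2_pos apply simp
  by (rule cont_gg)

lemma P'_strict: assumes "n \<ge> 2" "0 \<le> a" "a < b" shows "P' n a < P' n b"
  apply (rule DERIV_pos_imp_increasing_open[OF assms(3)])
   apply (rule exI, rule conjI, rule P'_deriv)
  using assms P2_pos apply simp
  by (rule cont_P')

lemma hh_mono: assumes "0 \<le> a" "a \<le> b" "b \<le> 1" shows "hh n a \<le> hh n b"
  apply (rule DERIV_nonneg_imp_increasing_open[OF assms(2)])
   apply (rule exI, rule conjI, rule hh_deriv)
  using assms P2_nonneg apply simp
  by (rule cont_hh)

lemma gg_mono: assumes "n \<ge> 2" "0 \<le> a" "a \<le> b" shows "gg n a \<le> gg n b"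
  using gg_strict[OF assms(1,2)] assms(3) by (metis less_eq_real_def)

lemma P'_mono: assumes "n \<ge> 2" "0 \<le> a" "a \<le> b" shows "P' n a \<le> P' n b"
  using P'_strict[OF assms(1,2)] assms(3) by (metis less_eq_real_def)

lemma P'_0: "n \<ge> 1 \<Longrightarrow> P' n 0 = 1"
proof -
  assume "n \<ge> 1"
  then have "P' n 0 = (\<Sum>i\<in>{1..n}. if i = 1 then 1 else 0)"
    unfolding P'_def by (intro sum.cong) auto
  also have "\<dots> = 1" using \<open>n \<ge> 1\<close> by (simp add: sum.delta)
  finally show ?thesis .
qed

lemma P_0: "P n 0 = 0" unfolding P_def by (intro sum.neutral) auto

lemma gg_0: "gg n 0 = 0" unfolding gg_def by (simp add: P_0)
lemma hh_0: "n \<ge> 1 \<Longrightarrow> hh n 0 = 1" unfolding hh_def by (simp add: gg_0 P'_0)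

lemma P'_1: "P' n 1 = real n * (real n + 1) / 2"
proof -
  have "P' n 1 = (\<Sum>i=Suc 0..n. real i)" unfolding P'_def by simp
  then show ?thesis using double_gauss_sum_from_Suc_0[of n, where 'a=real] by simp
qed

lemma P_Suc: "P (Suc n) x = P n x + x ^ Suc n"
  unfolding P_def by simp
lemma P'_Suc: "P' (Suc n) x = P' n x + real (Suc n) * x ^ n"
  unfolding P'_def by simp

lemma P_1: "P n 1 = real n" unfolding P_def by simp
lemma gg_1: "gg n 1 = real n * (real n - 1) / 2"
  unfolding gg_def by (simp add: P'_1 P_1 field_simps)
lemma hh_1: "hh n 1 = real n"
  unfolding hh_def gg_def by (simp add: P_1)

lemma cf_P: "(1 - x) * P n x = x - x ^ (n + 1)"
proof (induction n)
  case 0 then show ?case by (simp add: P_def)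
next
  case (Suc n)
  have "(1 - x) * P (Suc n) x = (1 - x) * P n x + (1 - x) * x ^ Suc n" by (simp add: P_Suc algebra_simps)
  also have "\<dots> = x - x ^ (Suc n + 1)" using Suc by (simp add: algebra_simps)
  finally show ?case .
qed

lemma cf_P': "(1 - x)^2 * P' n x = 1 - (real n + 1) * x ^ n + real n * x ^ (n + 1)"
proof (induction n)
  case 0 then show ?case by (simp add: P'_def)
next
  case (Suc n)
  have "(1 - x)^2 * P' (Suc n) x = (1 - x)^2 * P' n x + (1-x)^2 * real (Suc n) * x ^ n"
    by (simp add: P'_Suc algebra_simps)
  also have "\<dots> = 1 - (real n + 1) * x ^ n + real n * x ^ (n + 1) + (1-x)^2 * real (Suc n) * x ^ n"
    using Suc by linarith
  also have "\<dots> = 1 - (real (Suc n) + 1) * x ^ Suc n + real (Suc n) * x ^ (Suc n + 1)"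
    by (simp add: power2_eq_square algebra_simps)
  finally show ?case .
qed

lemma cf_gg: "(1 - x)^2 * gg n x = x^2 - real n * x^n * x + (real n - 1) * x^n * x^2"
proof -
  have "(1 - x)^2 * gg n x = x * ((1 - x)^2 * P' n x) - (1 - x) * ((1 - x) * P n x)"
    unfolding gg_def by (simp add: algebra_simps power2_eq_square)
  also have "\<dots> = x^2 - real n * x^n * x + (real n - 1) * x^n * x^2"
    unfolding cf_P' cf_P by (simp add: algebra_simps power2_eq_square)
  finally show ?thesis .
qed

lemma cf_hh: "(1 - x)^2 * hh n x = (1 - x) * (1 + x - (real n + 1) * x^n + (real n - 1) * x^n * x)"
proof -
  have "(1 - x)^2 * hh n x = (1 - x)^2 * P' n x - (1 - x)^2 * gg n x"
    unfolding hh_def by (simp add: algebra_simps)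
  also have "\<dots> = (1 - x) * (1 + x - (real n + 1) * x^n + (real n - 1) * x^n * x)"
    unfolding cf_P' cf_gg by (simp add: algebra_simps power2_eq_square)
  finally show ?thesis .
qed

lemma geom_bound:
  assumes "0 \<le> y" "y \<le> 1"
  shows "2 * (\<Sum>k<n. y^k) \<le> 2 + 2 * (real n - 1) * y^n + (1 - y) * real n * (real n - 1)"
proof (induction n)
  case 0 then show ?case by simp
next
  case (Suc n)
  have "y^n * (1 - y) \<le> 1 - y" using assms by (simp add: mult_left_le_one_le power_le_one mult_le_one)
  then have a: "real n * (y^n * (1 - y)) \<le> real n * (1 - y)" by (intro mult_left_mono) auto
  have e: "2 + 2 * (real (Suc n) - 1) * y^(Suc n) + (1 - y) * real (Suc n) * (real (Suc n) - 1)
       = 2 + 2 * (real n - 1) * y^n + (1 - y) * real n * (real n - 1) + 2 * y^n + 2 * (real n * (1 - y) - real n * (y^n * (1 - y)))"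
    by (simp add: algebra_simps)
  have "2 * (\<Sum>k<Suc n. y^k) = 2 * (\<Sum>k<n. y^k) + 2 * y^n" by simp
  also have "\<dots> \<le> 2 + 2 * (real n - 1) * y^n + (1 - y) * real n * (real n - 1) + 2 * y^n"
    using Suc by linarith
  also have "\<dots> \<le> 2 + 2 * (real n - 1) * y^n + (1 - y) * real n * (real n - 1) + 2 * y^n + 2 * (real n * (1 - y) - real n * (y^n * (1 - y)))"
    using a by (intro le_add_same_cancel1[THEN iffD2]) simp
  also have "\<dots> = 2 + 2 * (real (Suc n) - 1) * y^(Suc n) + (1 - y) * real (Suc n) * (real (Suc n) - 1)"
    using e by linarith
  finally show ?case .
qed

lemma core_E:
  fixes y w nn D :: real
  assumes y: "0 \<le> y" "y < 1" and w: "w = y ^ n" and nn: "nn = real n" and n1: "n \<ge> 1"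
  shows "0 \<le> (1 + y - 2 * (w * (nn + 1 - (nn - 1) * y)))^2 + 4 * y * (1 - 2 * w)"
proof (cases "w \<le> 1/2")
  case True then show ?thesis using y by (intro add_nonneg_nonneg) auto
next
  case False
  define D where "D = 1 - y"
  define v where "v = 2 * w - 1"
  define B where "B = 2 * (nn - 1) * w + 1"
  define T where "T = (\<Sum>k<n. y^k)"
  have D0: "D > 0" using y D_def by simp
  have v0: "v \<ge> 0" using False v_def by simp
  have w1: "w \<le> 1" using w y by (simp add: power_le_one)
  have T1: "1 - w = D * T" unfolding w D_def T_def by (rule one_diff_power_eq)
  have T2: "2 * T \<le> 2 + 2 * (nn - 1) * w + D * nn * (nn - 1)"
    using geom_bound[OF y(1)] y unfolding T_def w nn D_def by simp
  have E0: "(1 + y - 2 * (w * (nn + 1 - (nn - 1) * y)))^2 + 4 * y * (1 - 2 * w)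
      = D^2 * B^2 + 8 * v * D * ((nn - 1) * w + 1) - 8 * v * (1 - w)"
    unfolding D_def v_def B_def by (simp add: power2_eq_square algebra_simps)
  have E: "(1 + y - 2 * (w * (nn + 1 - (nn - 1) * y)))^2 + 4 * y * (1 - 2 * w)
      = D^2 * B^2 + 8 * v * D * ((nn - 1) * w + 1 - T)"
    unfolding E0 T1 by (simp add: algebra_simps)
  have s1: "4 * v * D * (2 * ((nn - 1) * w + 1) - 2 * T) \<ge> 4 * v * D * (- (D * nn * (nn - 1)))"
  proof -
    have aux: "- c \<le> 2 * (a + 1) - 2 * t" if "2 * t \<le> 2 + 2 * a + c" for a c t :: real
      using that by (simp add: algebra_simps)
    have "- (D * nn * (nn - 1)) \<le> 2 * ((nn - 1) * w + 1) - 2 * T"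
      using aux[OF T2[unfolded mult.assoc]] by (simp add: mult.assoc)
    then show ?thesis using v0 D0 by (intro mult_left_mono) auto
  qed
  have s2: "8 * v * D * ((nn - 1) * w + 1 - T) = 4 * v * D * (2 * ((nn - 1) * w + 1) - 2 * T)"
    by (simp add: algebra_simps)
  have s3: "D^2 * B^2 + 4 * v * D * (- (D * nn * (nn - 1)))
      = D^2 * (4 * (nn - 1) * (1 - w) * (nn - (nn - 1) * w) + 1)"
    unfolding B_def v_def by (simp add: power2_eq_square algebra_simps)
  have s4: "4 * (nn - 1) * (1 - w) * (nn - (nn - 1) * w) + 1 \<ge> 0"
  proof -
    have "nn \<ge> 1" using nn n1 by simp
    moreover have "nn - (nn - 1) * w \<ge> 0"
    proof -
      have "(nn - 1) * w \<le> (nn - 1) * 1" using w1 \<open>nn \<ge> 1\<close> by (intro mult_left_mono) auto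
      then show ?thesis by simp
    qed
    ultimately show ?thesis using w1 by (simp add: mult_nonneg_nonneg)
  qed
  have "0 \<le> D^2 * (4 * (nn - 1) * (1 - w) * (nn - (nn - 1) * w) + 1)"
    using s4 by simp
  also have "\<dots> = D^2 * B^2 + 4 * v * D * (- (D * nn * (nn - 1)))" using s3 by simp
  also have "\<dots> \<le> D^2 * B^2 + 8 * v * D * ((nn - 1) * w + 1 - T)" unfolding s2 using s1 by simp
  finally show ?thesis unfolding E .
qed

lemma core:
  assumes n1: "n \<ge> 1" and y: "0 \<le> y" "y \<le> 1"
  shows "8 * gg n y \<le> (2 * hh n y - 1)^2"
proof (cases "y = 1")
  case True
  have a: "8 * gg n 1 = 4 * real n * (real n - 1)" by (simp add: gg_1)
  have b: "(2 * hh n 1 - 1)^2 = 4 * real n * (real n - 1) + 1" by (simp add: hh_1 power2_eq_square algebra_simps)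
  show ?thesis using True a b by simp
next
  case False
  then have y1: "y < 1" using y by simp
  define w where "w = y ^ n"
  define nn where "nn = real n"
  have Dpos: "(1 - y) > 0" using y1 by simp
  have Dh: "(1 - y) * hh n y = 1 + y - (nn + 1) * w + (nn - 1) * w * y"
  proof -
    have "(1 - y) * ((1 - y) * hh n y) = (1 - y) * (1 + y - (nn + 1) * w + (nn - 1) * w * y)"
      using cf_hh[of y n] unfolding w_def nn_def by (simp add: power2_eq_square algebra_simps)
    then show ?thesis using Dpos by simp
  qed
  have Dg: "(1 - y)^2 * gg n y = y^2 - nn * w * y + (nn - 1) * w * y^2"
    using cf_gg[of y n] unfolding w_def nn_def by simp
  have "(1 - y)^2 * ((2 * hh n y - 1)^2 - 8 * gg n y)
      = (2 * ((1 - y) * hh n y) - (1 - y))^2 - 8 * ((1 - y)^2 * gg n y)"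
    by (simp add: power2_eq_square algebra_simps)
  also have "\<dots> = (1 + y - 2 * (w * (nn + 1 - (nn - 1) * y)))^2 + 4 * y * (1 - 2 * w)"
    unfolding Dh Dg by (simp add: power2_eq_square algebra_simps)
  also have "\<dots> \<ge> 0" using core_E[OF y(1) y1 w_def nn_def n1] .
  finally have "0 \<le> (1 - y)^2 * ((2 * hh n y - 1)^2 - 8 * gg n y)" .
  then have "0 \<le> (2 * hh n y - 1)^2 - 8 * gg n y" using Dpos by (simp add: zero_le_mult_iff)
  then show ?thesis by simp
qed

lemma gg_nonneg: "n \<ge> 2 \<Longrightarrow> 0 \<le> y \<Longrightarrow> 0 \<le> gg n y"
  using gg_mono[of n 0 y] by (simp add: gg_0)

lemma hh_ge1: "n \<ge> 1 \<Longrightarrow> 0 \<le> y \<Longrightarrow> y \<le> 1 \<Longrightarrow> 1 \<le> hh n y"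
  using hh_mono[of 0 y n] by (simp add: hh_0)

lemma sqrt_step:
  assumes n2: "n \<ge> 2" and y: "0 \<le> y" "y \<le> 1"
  shows "sqrt (2 * gg n y) + 1 \<le> sqrt (2 * P' n y)"
proof -
  have g0: "0 \<le> gg n y" using gg_nonneg n2 y by simp
  have h1: "1 \<le> hh n y" using hh_ge1 n2 y by simp
  have c: "8 * gg n y \<le> (2 * hh n y - 1)^2" using core n2 y by simp
  have "sqrt (8 * gg n y) \<le> sqrt ((2 * hh n y - 1)^2)" using c by (rule real_sqrt_le_mono)
  also have "\<dots> = 2 * hh n y - 1" using h1 by simp
  finally have a: "sqrt (8 * gg n y) \<le> 2 * hh n y - 1" .
  have "sqrt (8 * gg n y) = 2 * sqrt (2 * gg n y)"
  proof -
    have "sqrt (8 * gg n y) = sqrt (4 * (2 * gg n y))" by simp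
    also have "\<dots> = sqrt 4 * sqrt (2 * gg n y)" by (rule real_sqrt_mult)
    also have "sqrt 4 = (2::real)" by (simp add: real_sqrt_eq_iff power2_eq_square[symmetric])
    finally show ?thesis by simp
  qed
  with a have b: "2 * sqrt (2 * gg n y) \<le> 2 * hh n y - 1" by simp
  have "(sqrt (2 * gg n y) + 1)^2 = 2 * gg n y + 2 * sqrt (2 * gg n y) + 1"
    using g0 by (simp add: power2_eq_square algebra_simps)
  also have "\<dots> \<le> 2 * P' n y" using b unfolding hh_def by simp
  finally have "(sqrt (2 * gg n y) + 1)^2 \<le> 2 * P' n y" .
  then show ?thesis by (metis real_le_rsqrt)
qed

lemma half_pow_bound: "n \<ge> 3 \<Longrightarrow> (real n + 3) * (1/2)^n \<le> (3/4::real)"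
proof (induction n rule: nat_induct_at_least)
  case base then show ?case by (simp add: power_divide)
next
  case (Suc n)
  have "(real (Suc n) + 3) * (1/2)^(Suc n) = ((real n + 4) / 2) * (1/2)^n" by simp
  also have "\<dots> \<le> (real n + 3) * (1/2)^n" by (intro mult_right_mono) auto
  finally have "(real (Suc n) + 3) * (1/2)^(Suc n) \<le> (real n + 3) * (1/2)^n" .
  then show ?case using Suc by linarith
qed

lemma gg_half: "gg n (1/2) = 1 - (real n + 1) * (1/2)^n"
proof -
  have "(1 - 1/2)^2 * gg n (1/2) = (1/2)^2 - real n * (1/2)^n * (1/2) + (real n - 1) * (1/2)^n * (1/2)^2"
    by (rule cf_gg)
  then show ?thesis by (simp add: power2_eq_square algebra_simps)
qed

lemma hh_half: "hh n (1/2) = 3 - (real n + 3) * (1/2)^n"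
proof -
  have "(1 - 1/2)^2 * hh n (1/2) = (1 - 1/2) * (1 + 1/2 - (real n + 1) * (1/2)^n + (real n - 1) * (1/2)^n * (1/2))"
    by (rule cf_hh)
  then show ?thesis by (simp add: power2_eq_square algebra_simps)
qed

lemma key:
  fixes x :: "nat \<Rightarrow> real"
  assumes n3: "n \<ge> 3" and x1: "x 1 = 0"
    and xr: "\<And>j. 1 \<le> j \<Longrightarrow> j \<le> n \<Longrightarrow> 0 \<le> x j \<and> x j \<le> 1"
    and rec: "\<And>j. 1 \<le> j \<Longrightarrow> j < n \<Longrightarrow> gg n (x (Suc j)) = P' n (x j)"
  shows False
proof -
  have n2: "n \<ge> 2" using n3 by simp
  have g2: "gg n (x 2) = 1" using rec[of 1] x1 n3 P'_0[of n] by (simp add: numeral_2_eq_2)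
  have x2r: "0 \<le> x 2" "x 2 \<le> 1" using xr[of 2] n3 by auto
  have "gg n (1/2) < 1" unfolding gg_half by simp
  then have x2h: "1/2 \<le> x 2"
    using gg_mono[OF n2, of "x 2" "1/2"] x2r g2 by (cases "x 2 \<le> 1/2") auto
  have "hh n (1/2) \<ge> 9/4" unfolding hh_half using half_pow_bound[OF n3] by simp
  then have "hh n (x 2) \<ge> 9/4" using hh_mono[of "1/2" "x 2" n] x2h x2r by simp
  then have "P' n (x 2) \<ge> 13/4" using g2 unfolding hh_def by simp
  then have "sqrt (2 * P' n (x 2)) \<ge> sqrt (25/4)" by simp
  moreover have "sqrt (25/4) = (5/2::real)" by (rule real_sqrt_unique) (auto simp: power2_eq_square)
  ultimately have base: "sqrt (2 * P' n (x 2)) \<ge> 5/2" by simp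
  have ind: "2 + k \<le> n \<Longrightarrow> sqrt (2 * P' n (x (2 + k))) \<ge> 5/2 + real k" for k
  proof (induction k)
    case 0 then show ?case using base by simp
  next
    case (Suc k)
    have r: "gg n (x (Suc (2 + k))) = P' n (x (2 + k))" using rec[of "2 + k"] Suc.prems by simp
    have xr': "0 \<le> x (Suc (2 + k))" "x (Suc (2 + k)) \<le> 1" using xr[of "Suc (2 + k)"] Suc.prems by auto
    have "sqrt (2 * P' n (x (2 + Suc k))) \<ge> sqrt (2 * gg n (x (Suc (2 + k)))) + 1"
      using sqrt_step[OF n2 xr'] by simp
    then show ?case using r Suc by simp
  qed
  have e: "2 + (n - 2) = n" using n3 by simp
  have "sqrt (2 * P' n (x n)) \<ge> 5/2 + real (n - 2)" using ind[of "n - 2", unfolded e] by simp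
  then have lo: "sqrt (2 * P' n (x n)) \<ge> real n + 1/2" using n3 by (simp add: of_nat_diff)
  have xn: "0 \<le> x n" "x n \<le> 1" using xr[of n] n3 by auto
  have "P' n (x n) \<le> P' n 1" using P'_mono[OF n2 xn] .
  then have "sqrt (2 * P' n (x n)) \<le> sqrt (real n * (real n + 1))" unfolding P'_1 by simp
  also have "\<dots> < sqrt ((real n + 1/2)^2)"
    by (intro real_sqrt_less_mono) (simp add: power2_eq_square algebra_simps)
  also have "\<dots> = real n + 1/2" by simp
  finally show False using lo by simp
qed

definition Ginv :: "nat \<Rightarrow> real \<Rightarrow> real" where
  "Ginv n = the_inv_into {0..1} (gg n)"

definition clamp :: "nat \<Rightarrow> real \<Rightarrow> real" where
  "clamp n v = max 0 (min v (gg n 1))"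

fun XX :: "nat \<Rightarrow> real \<Rightarrow> nat \<Rightarrow> real" where
  "XX n s 0 = 0"
| "XX n s (Suc j) = (if j = 0 then 0 else Ginv n (clamp n (P' n (XX n s j) - real j * s)))"

lemma gg_inj: assumes "n \<ge> 2" shows "inj_on (gg n) {0..1}"
proof (rule inj_onI)
  fix x y assume x: "x \<in> {0..1}" and y: "y \<in> {0..1}" and e: "gg n x = gg n y"
  show "x = y"
  proof (rule ccontr)
    assume "x \<noteq> y"
    then consider "x < y" | "y < x" by linarith
    then show False
    proof cases
      case 1 then show False using gg_strict[OF assms, of x y] x e by simp
    next
      case 2 then show False using gg_strict[OF assms, of y x] y e by simp
    qed
  qed
qed

lemma gg_image: assumes "n \<ge> 2" shows "gg n ` {0..1} = {0..gg n 1}"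
proof
  show "gg n ` {0..1} \<subseteq> {0..gg n 1}"
  proof (rule image_subsetI)
    fix x :: real assume "x \<in> {0..1}"
    then show "gg n x \<in> {0..gg n 1}" using gg_mono[OF assms, of 0 x] gg_mono[OF assms, of x 1] gg_0[of n] by auto
  qed
next
  show "{0..gg n 1} \<subseteq> gg n ` {0..1}"
  proof
    fix v assume v: "v \<in> {0..gg n 1}"
    then obtain x where "0 \<le> x" "x \<le> 1" "gg n x = v"
      using IVT'[of "gg n" 0 v 1] cont_gg gg_0 by auto
    then show "v \<in> gg n ` {0..1}" by auto
  qed
qed

lemma Ginv_props:
  assumes "n \<ge> 2" "0 \<le> v" "v \<le> gg n 1"
  shows "0 \<le> Ginv n v" "Ginv n v \<le> 1" "gg n (Ginv n v) = v"
proof -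
  have v: "v \<in> gg n ` {0..1}" using gg_image[OF assms(1)] assms by auto
  have "Ginv n v \<in> {0..1}" unfolding Ginv_def using the_inv_into_into[OF gg_inj[OF assms(1)] v order_refl] .
  then show "0 \<le> Ginv n v" "Ginv n v \<le> 1" by auto
  show "gg n (Ginv n v) = v" unfolding Ginv_def using f_the_inv_into_f[OF gg_inj[OF assms(1)] v] .
qed

lemma Ginv_gg: "n \<ge> 2 \<Longrightarrow> 0 \<le> x \<Longrightarrow> x \<le> 1 \<Longrightarrow> Ginv n (gg n x) = x"
  unfolding Ginv_def using the_inv_into_f_f[OF gg_inj] by auto

lemma Ginv_cont: assumes "n \<ge> 2" shows "continuous_on {0..gg n 1} (Ginv n)"
proof -
  have "continuous_on (gg n ` {0..1}) (Ginv n)"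
    by (rule continuous_on_inv) (auto simp: cont_gg Ginv_gg[OF assms])
  then show ?thesis using gg_image[OF assms] by simp
qed

lemma G1_pos: "n \<ge> 2 \<Longrightarrow> gg n 1 \<ge> 1"
proof -
  assume "n \<ge> 2"
  then have a: "real n \<ge> 2" by simp
  have "real n * (real n - 1) \<ge> 2 * 1" using a by (intro mult_mono) auto
  then show ?thesis unfolding gg_1 by simp
qed

lemma clamp_range: "n \<ge> 2 \<Longrightarrow> 0 \<le> clamp n v \<and> clamp n v \<le> gg n 1"
  unfolding clamp_def using G1_pos[of n] by auto

lemma XX_range: assumes "n \<ge> 2" shows "0 \<le> XX n s j \<and> XX n s j \<le> 1"
proof (cases j)
  case 0 then show ?thesis by simp
next
  case (Suc i)
  then show ?thesis using Ginv_props[OF assms] clamp_range[OF assms] by auto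
qed

lemma XX_rec: assumes "n \<ge> 2" "j \<ge> 1"
  shows "gg n (XX n s (Suc j)) = clamp n (P' n (XX n s j) - real j * s)"
  using assms Ginv_props[OF assms(1)] clamp_range[OF assms(1)] by auto

lemma XX_1: "XX n s 1 = 0" by simp

lemma XX_cont: assumes "n \<ge> 2" shows "continuous_on {0..1} (\<lambda>s. XX n s j)"
proof (induction j)
  case 0 then show ?case by simp
next
  case (Suc j)
  show ?case
  proof (cases "j = 0")
    case True then show ?thesis by simp
  next
    case False
    have c1: "continuous_on {0..1} (\<lambda>s. clamp n (P' n (XX n s j) - real j * s))"
      unfolding clamp_def
      by (intro continuous_intros continuous_on_compose2[OF cont_P' Suc.IH]) auto
    have "continuous_on {0..1} (\<lambda>s. Ginv n (clamp n (P' n (XX n s j) - real j * s)))"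
      by (rule continuous_on_compose2[OF Ginv_cont[OF assms] c1]) (use clamp_range[OF assms] in auto)
    then show ?thesis using False by simp
  qed
qed

lemma P'_ge1: "n \<ge> 2 \<Longrightarrow> 0 \<le> x \<Longrightarrow> 1 \<le> P' n x"
  using P'_mono[of n 0 x] P'_0[of n] by simp

lemma P'1_gt: "n \<ge> 1 \<Longrightarrow> 0 \<le> s \<Longrightarrow> s \<le> 1 \<Longrightarrow> k \<le> n \<Longrightarrow> gg n 1 + real n - real k * s \<le> P' n 1 - real k * s"
  unfolding gg_1 P'_1 by (simp add: field_simps)

lemma P'1_ge: assumes "0 \<le> s" "s \<le> 1" "k \<le> n" shows "gg n 1 \<le> P' n 1 - real k * s"
proof -
  have "real k * s \<le> real n * 1" using assms by (intro mult_mono) auto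
  moreover have "P' n 1 = gg n 1 + real n" unfolding gg_1 P'_1 by (simp add: field_simps)
  ultimately show ?thesis by simp
qed

lemma XX_stay:
  assumes n2: "n \<ge> 2" and s: "0 \<le> s" "s \<le> 1" and j: "1 \<le> j" "j \<le> m" "m \<le> n"
    and one: "XX n s j = 1"
  shows "XX n s m = 1"
  using j(2) j(3)
proof (induction m rule: dec_induct)
  case base then show ?case using one by simp
next
  case (step k)
  have k0: "k \<noteq> 0" using step j by simp
  have "gg n 1 \<le> P' n 1 - real k * s" using P'1_ge[OF s, of k n] step by simp
  then have "clamp n (P' n (XX n s k) - real k * s) = gg n 1"
    using step G1_pos[OF n2] unfolding clamp_def by simp
  then show ?case using k0 Ginv_gg[OF n2, of 1] by simp
qed

lemma XX_at1: assumes "n \<ge> 2" shows "XX n 1 j = 0"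
proof (induction j)
  case 0 then show ?case by simp
next
  case (Suc j)
  show ?case
  proof (cases "j = 0")
    case True then show ?thesis by simp
  next
    case False
    have "P' n (XX n 1 j) - real j * 1 \<le> 0" using Suc P'_0[of n] assms False by simp
    then have "clamp n (P' n (XX n 1 j) - real j * 1) = 0" unfolding clamp_def using G1_pos[OF assms] by simp
    then show ?thesis using False Ginv_gg[OF assms, of 0] gg_0[of n] by simp
  qed
qed

lemma XX_at0: assumes n3: "n \<ge> 3" shows "XX n 0 n = 1"
proof (rule ccontr)
  assume ne: "XX n 0 n \<noteq> 1"
  have n2: "n \<ge> 2" using n3 by simp
  show False
  proof (rule key[OF n3, of "XX n 0"])
    show "XX n 0 1 = 0" by simp
    show "\<And>j. 1 \<le> j \<Longrightarrow> j \<le> n \<Longrightarrow> 0 \<le> XX n 0 j \<and> XX n 0 j \<le> 1" using XX_range[OF n2] by blast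
    fix j assume j: "1 \<le> j" "j < n"
    have lt: "P' n (XX n 0 j) < gg n 1"
    proof (rule ccontr)
      assume "\<not> P' n (XX n 0 j) < gg n 1"
      then have "clamp n (P' n (XX n 0 j) - real j * 0) = gg n 1" unfolding clamp_def using G1_pos[OF n2] by simp
      then have "XX n 0 (Suc j) = 1" using j Ginv_gg[OF n2, of 1] by simp
      then have "XX n 0 n = 1" using XX_stay[OF n2, of 0 "Suc j" n] j by simp
      then show False using ne by simp
    qed
    have ge: "P' n (XX n 0 j) \<ge> 1" using P'_ge1[OF n2] XX_range[OF n2] by blast
    show "gg n (XX n 0 (Suc j)) = P' n (XX n 0 j)"
      using XX_rec[OF n2 j(1), of 0] lt ge unfolding clamp_def by simp
  qed
qed

lemma exist_s:
  assumes n3: "n \<ge> 3"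
  shows "\<exists>s. 0 < s \<and> s < 1 \<and> XX n s 1 = 0 \<and> XX n s n = 1 \<and>
     (\<forall>j. 1 \<le> j \<longrightarrow> j < n \<longrightarrow> XX n s j < XX n s (Suc j)) \<and>
     (\<forall>j. 1 \<le> j \<longrightarrow> j < n \<longrightarrow> gg n (XX n s (Suc j)) = P' n (XX n s j) - real j * s)"
proof -
  have n2: "n \<ge> 2" using n3 by simp
  define S where "S = {s \<in> {0..1}. XX n s n = 1}"
  have clS: "closed S" unfolding S_def
    by (rule continuous_closed_preimage_constant[OF XX_cont[OF n2] closed_atLeastAtMost])
  have S0: "0 \<in> S" unfolding S_def using XX_at0[OF n3] by simp
  have bdd: "bdd_above S" unfolding S_def by (rule bdd_aboveI[of _ 1]) auto
  define s0 where "s0 = Sup S"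
  have s0S: "s0 \<in> S" unfolding s0_def using closed_contains_Sup[OF _ bdd clS] S0 by auto
  have upper: "s \<le> s0" if "s \<in> S" for s unfolding s0_def using cSup_upper[OF that bdd] .
  have s0r: "0 \<le> s0" "s0 \<le> 1" "XX n s0 n = 1" using s0S unfolding S_def by auto
  have s0ne1: "s0 \<noteq> 1" using s0r(3) XX_at1[OF n2, of n] by auto
  then have s0lt1: "s0 < 1" using s0r by simp
  define m where "m = n - 1"
  have nm: "n = Suc m" and m2: "m \<ge> 2" using n3 unfolding m_def by auto
  define X where "X j = XX n s0 j" for j
  define v where "v j = P' n (X j) - real j * s0" for j
  define vf where "vf s = P' n (XX n s m) - real m * s" for s
  have Xr: "0 \<le> X j" "X j \<le> 1" for j using XX_range[OF n2] unfolding X_def by auto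
  have X1: "X 1 = 0" unfolding X_def by simp
  have Xn: "X n = 1" using s0r unfolding X_def by simp
  have rec: "gg n (X (Suc j)) = clamp n (v j)" if "1 \<le> j" for j
    using XX_rec[OF n2 that] unfolding X_def v_def by simp
  have G1: "gg n 1 \<ge> 1" using G1_pos[OF n2] .
  have one_iff: "X (Suc j) = 1 \<longleftrightarrow> v j \<ge> gg n 1" if "1 \<le> j" for j
  proof
    assume "X (Suc j) = 1"
    then have "clamp n (v j) = gg n 1" using rec[OF that] by simp
    then show "v j \<ge> gg n 1" unfolding clamp_def using G1 by (auto simp: max_def min_def split: if_splits)
  next
    assume "v j \<ge> gg n 1"
    then have "clamp n (v j) = gg n 1" unfolding clamp_def using G1 by simp
    then have "gg n (X (Suc j)) = gg n 1" using rec[OF that] by simp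
    then show "X (Suc j) = 1" using gg_inj[OF n2] Xr[of "Suc j"] by (auto dest: inj_onD)
  qed
  have contvf: "continuous_on {0..1} vf" unfolding vf_def
    by (intro continuous_intros continuous_on_compose2[OF cont_P' XX_cont[OF n2]]) auto
  have A: "vf s0 \<le> gg n 1"
  proof (rule ccontr)
    assume "\<not> vf s0 \<le> gg n 1"
    then have d: "vf s0 - gg n 1 > 0" by simp
    obtain \<delta> where \<delta>: "\<delta> > 0" "\<And>s. s \<in> {0..1} \<Longrightarrow> dist s s0 < \<delta> \<Longrightarrow> dist (vf s) (vf s0) < vf s0 - gg n 1"
      using contvf d s0r(1,2) unfolding continuous_on_iff by (metis atLeastAtMost_iff)
    define s1 where "s1 = min 1 (s0 + \<delta>/2)"
    have s1r: "s1 \<in> {0..1}" "s0 < s1" "dist s1 s0 < \<delta>"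
      unfolding s1_def using s0r s0lt1 \<delta>(1) by (auto simp: dist_real_def)
    have "vf s1 > gg n 1" using \<delta>(2)[OF s1r(1) s1r(3)] by (auto simp: dist_real_def)
    then have "clamp n (P' n (XX n s1 m) - real m * s1) = gg n 1" unfolding clamp_def vf_def using G1 by simp
    then have "XX n s1 n = 1" using nm m2 Ginv_gg[OF n2, of 1] by simp
    then have "s1 \<in> S" unfolding S_def using s1r by simp
    then show False using upper s1r(2) by fastforce
  qed
  have vm: "v m = gg n 1"
  proof -
    have "v m \<ge> gg n 1" using one_iff[of m] m2 Xn nm by simp
    moreover have "v m = vf s0" unfolding v_def vf_def X_def by simp
    ultimately show ?thesis using A by simp
  qed
  have B: "X j < 1" if "1 \<le> j" "j \<le> m" for j
  proof (rule ccontr)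
    assume "\<not> X j < 1"
    then have "X j = 1" using Xr[of j] by simp
    then have "X m = 1" using XX_stay[OF n2 s0r(1,2) that(1) that(2)] nm unfolding X_def by simp
    then have "v m = P' n 1 - real m * s0" unfolding v_def by simp
    moreover have "gg n 1 + 1 \<le> P' n 1 - real m * s0"
    proof -
      have "real m * s0 \<le> real m * 1" using s0r by (intro mult_left_mono) auto
      moreover have "P' n 1 = gg n 1 + real n" unfolding gg_1 P'_1 by (simp add: field_simps)
      ultimately show ?thesis using nm by simp
    qed
    ultimately show False using vm by simp
  qed
  have C: "gg n (X (Suc j)) = max 0 (v j)" if "1 \<le> j" "j < n" for j
  proof (cases "j = m")
    case True
    then show ?thesis using rec[OF that(1)] vm G1 unfolding clamp_def by simp
  next
    case False
    then have "Suc j \<le> m" using that nm by simp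
    then have "X (Suc j) < 1" using B by simp
    then have "v j < gg n 1" using one_iff[OF that(1)] by simp
    then show ?thesis using rec[OF that(1)] unfolding clamp_def by simp
  qed
  have D: "s0 > 0"
  proof (rule ccontr)
    assume "\<not> s0 > 0"
    then have z: "s0 = 0" using s0r by simp
    show False
    proof (rule key[OF n3, of X])
      show "X 1 = 0" by (rule X1)
      show "\<And>j. 1 \<le> j \<Longrightarrow> j \<le> n \<Longrightarrow> 0 \<le> X j \<and> X j \<le> 1" using Xr by simp
      fix j assume j: "1 \<le> j" "j < n"
      have "v j \<ge> 1" unfolding v_def using z P'_ge1[OF n2 Xr(1)] by simp
      then show "gg n (X (Suc j)) = P' n (X j)" using C[OF j] z unfolding v_def by simp
    qed
  qed
  have E1: "hh n (X j) \<le> real j * s0" if "1 \<le> j" "j < n" "X (Suc j) \<le> X j" for j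
  proof -
    have "gg n (X (Suc j)) \<le> gg n (X j)" using gg_mono[OF n2 Xr(1) that(3)] .
    moreover have "gg n (X (Suc j)) \<ge> v j" using C[OF that(1,2)] by simp
    ultimately show ?thesis unfolding v_def hh_def by simp
  qed
  have E2: "X (Suc j) \<le> X j" if "1 \<le> j" "j < n" "hh n (X j) \<le> real j * s0" for j
  proof -
    have "v j \<le> gg n (X j)" using that(3) unfolding v_def hh_def by simp
    then have "gg n (X (Suc j)) \<le> gg n (X j)" using C[OF that(1,2)] gg_nonneg[OF n2 Xr(1)] by simp
    then show ?thesis using gg_strict[OF n2 Xr(1)[of j], of "X (Suc j)"] by (metis not_le order_less_irrefl)
  qed
  have E3: "hh n (X (j + k)) \<le> real (j + k) * s0" if "1 \<le> j" "j + k \<le> m" "hh n (X j) \<le> real j * s0" for j k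
    using that(2)
  proof (induction k)
    case 0 then show ?case using that(3) by simp
  next
    case (Suc k)
    have IH: "hh n (X (j + k)) \<le> real (j + k) * s0" using Suc by simp
    have le: "X (Suc (j + k)) \<le> X (j + k)" using E2[of "j + k"] IH that(1) Suc.prems nm by simp
    have "hh n (X (Suc (j + k))) \<le> hh n (X (j + k))" using hh_mono[OF Xr(1) le Xr(2)] .
    also have "\<dots> \<le> real (j + k) * s0" by (rule IH)
    also have "\<dots> \<le> real (j + Suc k) * s0" using s0r by (intro mult_right_mono) auto
    finally show ?case by simp
  qed
  have E: "X j < X (Suc j)" if "1 \<le> j" "j < n" for j
  proof (rule ccontr)
    assume "\<not> X j < X (Suc j)"
    then have "X (Suc j) \<le> X j" by simp
    then have h: "hh n (X j) \<le> real j * s0" using E1 that by simp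
    have jm: "j + (m - j) = m" using that nm by simp
    have "hh n (X m) \<le> real m * s0" using E3[OF that(1) _ h, of "m - j"] jm by simp
    then have "X (Suc m) \<le> X m" using E2[of m] m2 nm by simp
    moreover have "X m < 1" using B[of m] m2 by simp
    ultimately show False using Xn nm by simp
  qed
  have F: "gg n (X (Suc j)) = v j" if "1 \<le> j" "j < n" for j
  proof -
    have "0 < X (Suc j)" using E[OF that] Xr(1)[of j] by simp
    then have "gg n 0 < gg n (X (Suc j))" using gg_strict[OF n2, of 0] by simp
    then have "0 < max 0 (v j)" using C[OF that] gg_0 by simp
    then show ?thesis using C[OF that] by simp
  qed
  show ?thesis
    apply (rule exI[of _ s0])
    using D s0lt1 X1 Xn E F unfolding X_def v_def by simp
qed

lemma uniq_aux:
  fixes x1 x2 :: "nat \<Rightarrow> real"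
  assumes n2: "n \<ge> 2" and s: "s2 < s1"
    and a1: "x1 1 = 0" "x1 n = 1" "\<And>j. 1 \<le> j \<Longrightarrow> j \<le> n \<Longrightarrow> 0 \<le> x1 j \<and> x1 j \<le> 1"
      "\<And>j. 1 \<le> j \<Longrightarrow> j < n \<Longrightarrow> gg n (x1 (Suc j)) = P' n (x1 j) - real j * s1"
    and a2: "x2 1 = 0" "x2 n = 1" "\<And>j. 1 \<le> j \<Longrightarrow> j \<le> n \<Longrightarrow> 0 \<le> x2 j \<and> x2 j \<le> 1"
      "\<And>j. 1 \<le> j \<Longrightarrow> j < n \<Longrightarrow> gg n (x2 (Suc j)) = P' n (x2 j) - real j * s2"
  shows False
proof -
  have step: "x1 (Suc j) < x2 (Suc j)" if j: "1 \<le> j" "j < n" and le: "x1 j \<le> x2 j" for j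
  proof -
    have r1: "0 \<le> x1 j" using a1(3)[of j] j by simp
    have "P' n (x1 j) \<le> P' n (x2 j)" using P'_mono[OF n2 r1 le] .
    moreover have "real j * s2 < real j * s1" using s j by simp
    ultimately have "gg n (x1 (Suc j)) < gg n (x2 (Suc j))" using a1(4)[OF j] a2(4)[OF j] by simp
    moreover have "0 \<le> x2 (Suc j)" using a2(3)[of "Suc j"] j by simp
    ultimately show ?thesis using gg_mono[OF n2, of "x2 (Suc j)" "x1 (Suc j)"] by (metis not_le)
  qed
  have le: "x1 j \<le> x2 j" if "1 \<le> j" "j \<le> n" for j
    using that
  proof (induction j rule: nat_induct_at_least)
    case base then show ?case using a1(1) a2(1) by simp
  next
    case (Suc j) then show ?case using step[of j] by simp
  qed
  have "x1 n < x2 n" using step[of "n - 1"] le[of "n - 1"] n2 by simp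
  then show False using a1(2) a2(2) by simp
qed

lemma get_seq:
  fixes \<epsilon> :: "nat \<Rightarrow> real"
  assumes n2: "n \<ge> 2"
    and h: "\<epsilon> 1 = 1" "\<epsilon> n = 0" "\<forall>j\<in>{1..<n}. \<epsilon> (j + 1) < \<epsilon> j"
       "\<forall>j\<in>{1..n-1}. P' n (1 - \<epsilon> (j + 1)) - P' n (1 - \<epsilon> j) =
          \<epsilon> (j + 1) * P' n (1 - \<epsilon> (j + 1)) + P n (1 - \<epsilon> (j + 1)) - real j / \<zeta>"
  shows "(\<lambda>j. 1 - \<epsilon> j) 1 = 0 \<and> (\<lambda>j. 1 - \<epsilon> j) n = 1 \<and>
     (\<forall>j. 1 \<le> j \<longrightarrow> j \<le> n \<longrightarrow> 0 \<le> (\<lambda>j. 1 - \<epsilon> j) j \<and> (\<lambda>j. 1 - \<epsilon> j) j \<le> 1) \<and>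
     (\<forall>j. 1 \<le> j \<longrightarrow> j < n \<longrightarrow> gg n ((\<lambda>j. 1 - \<epsilon> j) (Suc j)) = P' n ((\<lambda>j. 1 - \<epsilon> j) j) - real j * (1 / \<zeta>))"
proof -
  have dec: "\<epsilon> j \<le> \<epsilon> i" if "1 \<le> i" "i \<le> j" "j \<le> n" for i j
    using that(2,3)
  proof (induction j rule: dec_induct)
    case base then show ?case by simp
  next
    case (step k)
    have "\<epsilon> (k + 1) < \<epsilon> k" using h(3) step that(1) by auto
    then show ?case using step by simp
  qed
  have rng: "0 \<le> 1 - \<epsilon> j \<and> 1 - \<epsilon> j \<le> 1" if "1 \<le> j" "j \<le> n" for j
    using dec[of 1 j] dec[of j n] that h(1,2) by simp
  have eq: "gg n (1 - \<epsilon> (Suc j)) = P' n (1 - \<epsilon> j) - real j * (1 / \<zeta>)" if "1 \<le> j" "j < n" for j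
  proof -
    have "P' n (1 - \<epsilon> (j + 1)) - P' n (1 - \<epsilon> j) =
          \<epsilon> (j + 1) * P' n (1 - \<epsilon> (j + 1)) + P n (1 - \<epsilon> (j + 1)) - real j / \<zeta>"
      using h(4) that by auto
    then show ?thesis unfolding gg_def by (simp add: algebra_simps)
  qed
  show ?thesis using h(1,2) rng eq by simp
qed

theorem mainTheorem7:
  fixes n :: nat
  assumes "n > 2"
  shows "\<exists>!\<zeta>::real. \<zeta> > 1 \<and>
    (\<exists>\<epsilon> :: nat \<Rightarrow> real.
       \<epsilon> 1 = 1 \<and> \<epsilon> n = 0 \<and>
       (\<forall>j\<in>{1..<n}. \<epsilon> (j + 1) < \<epsilon> j) \<and>
       (\<forall>j\<in>{1..n-1}.
          P' n (1 - \<epsilon> (j + 1)) - P' n (1 - \<epsilon> j) =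
          \<epsilon> (j + 1) * P' n (1 - \<epsilon> (j + 1)) + P n (1 - \<epsilon> (j + 1)) - real j / \<zeta>))"
proof (rule ex_ex1I)
  have n3: "n \<ge> 3" using assms by simp
  have n2: "n \<ge> 2" using assms by simp
  obtain s where s: "0 < s" "s < 1" "XX n s 1 = 0" "XX n s n = 1"
     "\<forall>j. 1 \<le> j \<longrightarrow> j < n \<longrightarrow> XX n s j < XX n s (Suc j)"
     "\<forall>j. 1 \<le> j \<longrightarrow> j < n \<longrightarrow> gg n (XX n s (Suc j)) = P' n (XX n s j) - real j * s"
    using exist_s[OF n3] by blast
  show "\<exists>\<zeta>::real. \<zeta> > 1 \<and>
    (\<exists>\<epsilon> :: nat \<Rightarrow> real.
       \<epsilon> 1 = 1 \<and> \<epsilon> n = 0 \<and>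
       (\<forall>j\<in>{1..<n}. \<epsilon> (j + 1) < \<epsilon> j) \<and>
       (\<forall>j\<in>{1..n-1}.
          P' n (1 - \<epsilon> (j + 1)) - P' n (1 - \<epsilon> j) =
          \<epsilon> (j + 1) * P' n (1 - \<epsilon> (j + 1)) + P n (1 - \<epsilon> (j + 1)) - real j / \<zeta>))"
  proof (intro exI conjI)
    show "1 / s > 1" using s by simp
    show "(\<lambda>j. 1 - XX n s j) 1 = 1" using s by simp
    show "(\<lambda>j. 1 - XX n s j) n = 0" using s by simp
    show "\<forall>j\<in>{1..<n}. (\<lambda>j. 1 - XX n s j) (j + 1) < (\<lambda>j. 1 - XX n s j) j" using s(5) by auto
    show "\<forall>j\<in>{1..n-1}.
          P' n (1 - (\<lambda>j. 1 - XX n s j) (j + 1)) - P' n (1 - (\<lambda>j. 1 - XX n s j) j) =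
          (\<lambda>j. 1 - XX n s j) (j + 1) * P' n (1 - (\<lambda>j. 1 - XX n s j) (j + 1)) + P n (1 - (\<lambda>j. 1 - XX n s j) (j + 1)) - real j / (1 / s)"
    proof
      fix j assume j: "j \<in> {1..n-1}"
      then have j': "1 \<le> j" "j < n" using n2 by auto
      have g: "gg n (XX n s (Suc j)) = P' n (XX n s j) - real j * s" using s(6) j' by blast
      then show "P' n (1 - (\<lambda>j. 1 - XX n s j) (j + 1)) - P' n (1 - (\<lambda>j. 1 - XX n s j) j) =
          (\<lambda>j. 1 - XX n s j) (j + 1) * P' n (1 - (\<lambda>j. 1 - XX n s j) (j + 1)) + P n (1 - (\<lambda>j. 1 - XX n s j) (j + 1)) - real j / (1 / s)"
        unfolding gg_def by (simp add: algebra_simps)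
    qed
  qed
next
  fix z1 z2 :: real
  assume h1: "z1 > 1 \<and> (\<exists>\<epsilon> :: nat \<Rightarrow> real.
       \<epsilon> 1 = 1 \<and> \<epsilon> n = 0 \<and>
       (\<forall>j\<in>{1..<n}. \<epsilon> (j + 1) < \<epsilon> j) \<and>
       (\<forall>j\<in>{1..n-1}.
          P' n (1 - \<epsilon> (j + 1)) - P' n (1 - \<epsilon> j) =
          \<epsilon> (j + 1) * P' n (1 - \<epsilon> (j + 1)) + P n (1 - \<epsilon> (j + 1)) - real j / z1))"
  assume h2: "z2 > 1 \<and> (\<exists>\<epsilon> :: nat \<Rightarrow> real.
       \<epsilon> 1 = 1 \<and> \<epsilon> n = 0 \<and>
       (\<forall>j\<in>{1..<n}. \<epsilon> (j + 1) < \<epsilon> j) \<and>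
       (\<forall>j\<in>{1..n-1}.
          P' n (1 - \<epsilon> (j + 1)) - P' n (1 - \<epsilon> j) =
          \<epsilon> (j + 1) * P' n (1 - \<epsilon> (j + 1)) + P n (1 - \<epsilon> (j + 1)) - real j / z2))"
  have n2: "n \<ge> 2" using assms by simp
  obtain e1 where e1: "e1 1 = 1" "e1 n = 0" "\<forall>j\<in>{1..<n}. e1 (j + 1) < e1 j"
       "\<forall>j\<in>{1..n-1}. P' n (1 - e1 (j + 1)) - P' n (1 - e1 j) =
          e1 (j + 1) * P' n (1 - e1 (j + 1)) + P n (1 - e1 (j + 1)) - real j / z1"
    using h1 by blast
  obtain e2 where e2: "e2 1 = 1" "e2 n = 0" "\<forall>j\<in>{1..<n}. e2 (j + 1) < e2 j"
       "\<forall>j\<in>{1..n-1}. P' n (1 - e2 (j + 1)) - P' n (1 - e2 j) =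
          e2 (j + 1) * P' n (1 - e2 (j + 1)) + P n (1 - e2 (j + 1)) - real j / z2"
    using h2 by blast
  note g1 = get_seq[OF n2 e1]
  note g2 = get_seq[OF n2 e2]
  have z: "z1 > 1" "z2 > 1" using h1 h2 by auto
  show "z1 = z2"
  proof (rule ccontr)
    assume "z1 \<noteq> z2"
    then consider "z1 < z2" | "z2 < z1" by linarith
    then show False
    proof cases
      case 1
      then have "1 / z2 < 1 / z1" using z by (simp add: frac_less2)
      then show False
        using uniq_aux[OF n2, of "1 / z2" "1 / z1" "\<lambda>j. 1 - e1 j" "\<lambda>j. 1 - e2 j"] g1 g2 by blast
    next
      case 2
      then have "1 / z1 < 1 / z2" using z by (simp add: frac_less2)
      then show False
        using uniq_aux[OF n2, of "1 / z1" "1 / z2" "\<lambda>j. 1 - e2 j" "\<lambda>j. 1 - e1 j"] g1 g2 by blast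
    qed
  qed
qed

end
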